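(* There are universal constants $C,C'$ such that for all $A<n$ (with $n$ an integer) and all $\Lambda$ with $A\pm\Lambda$ integers, $|\Lambda|\le A-1$, \[ \Pr\bigl[BINGO(A+\Lambda,A-\Lambda;n,n)\bigr]\le\frac{C}{\sqrt{n-A}}e^{-\Lambda^2/(n-A)}, \] and, if moreover $\Lambda\neq0$, this is at most $\frac{C'}{|\Lambda|}e^{-\Lambda^2/(2(n-A))}$.
   Context: Fix $\alpha>1$. Consider the Markov chain on $\mathbb N\times\mathbb N$ which from state $(i,j)$ moves to $(i+1,j)$ with probability $i^\alpha/(i^\alpha+j^\alpha)$ and to $(i,j+1)$ with probability $j^\alpha/(i^\alpha+j^\alpha)$. For states $(a,b)$, $(c,d)$, $BINGO(a,b;c,d)$ denotes the event that this chain, started at state $(a,b)$, visits the state $(c,d)$. *)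

theory Defs
  imports "HOL-Probability.Probability"
begin

definition urn_step :: "real \<Rightarrow> nat \<times> nat \<Rightarrow> (nat \<times> nat) pmf" where
  "urn_step \<alpha> s = (case s of (i, j) \<Rightarrow>
     map_pmf (\<lambda>b. if b then (i + 1, j) else (i, j + 1))
       (bernoulli_pmf (real i powr \<alpha> / (real i powr \<alpha> + real j powr \<alpha>))))"

fun urn_walk :: "real \<Rightarrow> nat \<Rightarrow> nat \<times> nat \<Rightarrow> (nat \<times> nat) list pmf" where
  "urn_walk \<alpha> 0 s = return_pmf [s]"
| "urn_walk \<alpha> (Suc N) s =
     bind_pmf (urn_step \<alpha> s) (\<lambda>t. map_pmf (\<lambda>xs. s # xs) (urn_walk \<alpha> N t))"

text \<open>Pr[BINGO(a,b;c,d)]: probability that the chain started at (a,b) ever visits (c,d),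
 i.e. the limit (supremum) over N of the probability of visiting (c,d) within the
 first N steps (continuity of measure along the increasing events).\<close>
definition bingo_prob :: "real \<Rightarrow> nat \<Rightarrow> nat \<Rightarrow> nat \<Rightarrow> nat \<Rightarrow> real" where
  "bingo_prob \<alpha> a b c d =
     (SUP N. measure_pmf.prob (urn_walk \<alpha> N (a, b)) {xs. (c, d) \<in> set xs})"

end

theory Submission
  imports Defs
begin
lemma L2: assumes "0 \<le> (y::real)" shows "exp (y - y\<^sup>2/2) \<le> 1 + y"
proof -
  let ?f = "\<lambda>t::real. ln (1+t) - t + t\<^sup>2/2"
  have "?f 0 \<le> ?f y"
  proof (rule DERIV_nonneg_imp_nondecreasing[OF assms])
    fix t :: real assume t: "0 \<le> t" "t \<le> y"
    show "\<exists>d. (?f has_real_derivative d) (at t) \<and> 0 \<le> d"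
      apply (rule exI[of _ "1/(1+t) - 1 + t"])
      using t by (auto intro!: derivative_eq_intros simp: field_simps)
  qed
  hence "y - y\<^sup>2/2 \<le> ln (1+y)" by simp
  thus ?thesis using assms by (metis exp_le_cancel_iff exp_ln add_pos_nonneg zero_less_one)
qed

lemma L1: assumes "0 \<le> (x::real)" "x \<le> 1" shows "1 - x \<le> exp (- x - x\<^sup>2/2)"
proof (cases "x = 1")
  case True thus ?thesis by simp
next
  case False
  hence x1: "x < 1" using assms by simp
  let ?f = "\<lambda>t::real. - t - t\<^sup>2/2 - ln (1-t)"
  have "?f 0 \<le> ?f x"
  proof (rule DERIV_nonneg_imp_nondecreasing[OF assms(1)])
    fix t :: real assume t: "0 \<le> t" "t \<le> x"
    show "\<exists>d. (?f has_real_derivative d) (at t) \<and> 0 \<le> d"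
      apply (rule exI[of _ "- 1 - t + 1/(1-t)"])
      using t x1 by (auto intro!: derivative_eq_intros simp: field_simps)
  qed
  hence "ln (1-x) \<le> - x - x\<^sup>2/2" by simp
  thus ?thesis using x1 by (metis diff_gt_0_iff_gt exp_le_cancel_iff exp_ln)
qed
lemma bratio: "(n - k) * (n choose k) = Suc k * (n choose Suc k)"
  using binomial_absorb_comp[of n k] binomial_absorption[of k n] by linarith

lemma central_rec: "(M+1) * ((2*M+2) choose (M+1)) = 2*(2*M+1) * ((2*M) choose M)"
proof -
  have 1: "(2*M+2) * ((2*M+1) choose M) = ((2*M+2) choose (M+1)) * (M+1)"
    using Suc_times_binomial_eq[of "2*M+1" M] by (simp del: binomial_Suc_Suc)
  have 2: "(2*M+1) * ((2*M) choose M) = ((2*M+1) choose (M+1)) * (M+1)"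
    using Suc_times_binomial_eq[of "2*M" M] by (simp del: binomial_Suc_Suc)
  have 3: "(2*M+1) choose (M+1) = (2*M+1) choose M"
    using binomial_symmetric[of "M+1" "2*M+1"] by simp
  have "(M+1) * ((2*M+2) choose (M+1)) = (M+1) * (2 * ((2*M+1) choose M))"
    using 1 by (simp add: algebra_simps del: binomial_Suc_Suc)
  hence "((2*M+2) choose (M+1)) = 2 * ((2*M+1) choose M)" by (subst (asm) mult_cancel1) (simp del: binomial_Suc_Suc)
  with 2 3 show ?thesis by (simp add: algebra_simps del: binomial_Suc_Suc)
qed

lemma central: "(real ((2*M) choose M) / 4^M)\<^sup>2 * (2*M+1) \<le> 1"
proof (induction M)
  case 0 thus ?case by simp
next
  case (Suc M)
  define s where "s = real ((2*M) choose M) / 4^M"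
  define c where "c = real ((2*M+2) choose (M+1))"
  have "real (M+1) * c = 2*(2*M+1) * real ((2*M) choose M)"
    unfolding c_def using arg_cong[OF central_rec[of M], of real] by (simp only: of_nat_mult)
  hence "c = s * 4^M * (2*(2*M+1)) / (M+1)" unfolding s_def by (simp add: field_simps)
  hence e: "c / 4^(M+1) = s * (2*M+1) / (2*M+2)"
    by (simp add: field_simps)
  have "(s * (2*real M+1) / (2*real M+2))\<^sup>2 * (2*(real M+1)+1) = s\<^sup>2 * (2*real M+1) * ((2*real M+1)*(2*real M+3)/(2*real M+2)^2)"
    by (simp add: field_simps power2_eq_square)
  also have "\<dots> \<le> s\<^sup>2 * (2*real M+1) * 1"
  proof (rule mult_left_mono)
    have "(2*real M+1)*(2*real M+3) \<le> (2*real M+2)^2" by (simp add: power2_eq_square algebra_simps)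
    moreover have "0 < (2*real M+2)^2" by simp
    ultimately show "(2*real M+1)*(2*real M+3)/(2*real M+2)^2 \<le> 1" by simp
    show "0 \<le> s\<^sup>2 * (2*real M+1)" by simp
  qed
  also have "\<dots> \<le> 1" using Suc.IH by (simp add: s_def add.commute)
  finally have F: "(s * (2*real M+1) / (2*real M+2))\<^sup>2 * (2*(real M+1)+1) \<le> 1" .
  have e': "c / 4^(M+1) = s * (2*real M+1) / (2*real M+2)" using e by (simp add: add.commute)
  have "(c / 4^(M+1))\<^sup>2 * (2*(real M+1)+1) \<le> 1" by (subst e') (rule F)
  moreover have "2 * Suc M = 2*M+2" by simp
  ultimately show ?case unfolding c_def by (simp only: Suc_eq_plus1 of_nat_add of_nat_mult of_nat_numeral of_nat_1) (simp add: algebra_simps del: binomial_Suc_Suc)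
qed
lemma aux_div: "0 < (a::real) \<Longrightarrow> a * k = b * l \<Longrightarrow> k = b / a * l"
  by (simp add: field_simps)

lemma even_ratio:
  assumes M: "M \<ge> 1"
  shows "j \<le> M \<Longrightarrow> real ((2*M) choose (M - j)) \<le> real ((2*M) choose M) * exp ((real j)^2 / (2 * (real M)^2) - (real j)^2 / real M)"
proof (induction j)
  case 0 thus ?case by simp
next
  case (Suc j)
  hence jM: "j < M" by simp
  define x where "x = real j / M"
  define y where "y = real (j+1) / M"
  define E where "E = (\<lambda>j::nat. (real j)^2 / (2 * (real M)^2) - (real j)^2 / real M)"
  define C0 where "C0 = real ((2*M) choose M)"
  have x01: "0 \<le> x" "x \<le> 1" using jM by (auto simp: x_def)
  have y0: "0 \<le> y" by (auto simp: y_def)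
  have IH: "real ((2*M) choose (M - j)) \<le> C0 * exp (E j)" using Suc jM by (simp add: E_def C0_def)
  have rat: "real (M+j+1) * real ((2*M) choose (M - Suc j)) = real (M - j) * real ((2*M) choose (M - j))"
  proof -
    have "(2*M - (M - Suc j)) * ((2*M) choose (M - Suc j)) = Suc (M - Suc j) * ((2*M) choose Suc (M - Suc j))"
      by (rule bratio)
    moreover have "2*M - (M - Suc j) = M+j+1" "Suc (M - Suc j) = M - j" using jM by auto
    ultimately show ?thesis by (metis of_nat_mult)
  qed
  have pos: "0 < real (M+j+1)" by simp
  have r: "real (M - j) / real (M+j+1) = (1 - x) / (1 + y)"
  proof -
    have Mp: "0 < real M" using M by simp
    have a1: "1 - x = real (M-j) / real M" using jM Mp by (simp add: x_def of_nat_diff diff_divide_distrib)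
    have a2: "1 + y = real (M+j+1) / real M" using Mp by (simp add: y_def add_divide_distrib)
    show ?thesis unfolding a1 a2 using Mp by simp
  qed
  have e1: "real ((2*M) choose (M - Suc j)) = (1 - x) / (1 + y) * real ((2*M) choose (M - j))"
    unfolding r[symmetric] using aux_div[OF pos rat] .
  have r0: "0 \<le> (1 - x) / (1 + y)" using x01 y0 by simp
  have rb: "(1 - x) / (1 + y) \<le> exp (- x - x\<^sup>2/2) / exp (y - y\<^sup>2/2)"
    using L1[OF x01] L2[OF y0] x01 y0
    by (intro frac_le) auto
  have "real ((2*M) choose (M - Suc j)) \<le> exp (- x - x\<^sup>2/2) / exp (y - y\<^sup>2/2) * (C0 * exp (E j))"
    unfolding e1 by (rule mult_mono[OF rb IH]) simp_all
  also have "\<dots> = C0 * exp (- x - x\<^sup>2/2 - (y - y\<^sup>2/2) + E j)"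
    by (simp add: exp_diff exp_add)
  also have "- x - x\<^sup>2/2 - (y - y\<^sup>2/2) + E j = E (Suc j)"
    using M unfolding x_def y_def E_def by (simp add: field_simps power2_eq_square)
  finally show ?case by (simp add: E_def C0_def)
qed

lemma exp2_le: "exp (2::real) \<le> 9"
proof -
  have "exp (2::real) = exp 1 * exp 1" by (simp add: exp_add[symmetric])
  also have "\<dots> \<le> 3 * 3" using exp_le by (intro mult_mono) auto
  finally show ?thesis by simp
qed

definition bn :: "nat \<Rightarrow> nat \<Rightarrow> real" where
  "bn u v = real ((u+v) choose u) / 2^(u+v)"

lemma bn_sym: "bn u v = bn v u"
  unfolding bn_def using binomial_symmetric[of u "u+v"] by (simp add: add.commute)

lemma s_bound: "real ((2*M) choose M) / 4^M \<le> 1 / sqrt (2*real M+1)"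
proof -
  define s where "s = real ((2*M) choose M) / 4^M"
  have s0: "0 \<le> s" unfolding s_def by simp
  have "s\<^sup>2 * (2*real M+1) \<le> 1" using central[of M] by (simp add: s_def add.commute)
  hence "s\<^sup>2 \<le> 1 / (2*real M+1)" by (simp add: field_simps)
  hence "sqrt (s\<^sup>2) \<le> sqrt (1 / (2*real M+1))" by (rule real_sqrt_le_mono)
  thus ?thesis using s0 by (simp add: s_def real_sqrt_divide)
qed

lemma even_bound:
  assumes M: "M \<ge> 1" and j: "j \<le> M"
  shows "real ((2*M) choose (M - j)) / 4^M \<le> exp (1/2) / sqrt (real M) * exp (- ((real j)\<^sup>2) / real M)"
proof -
  have Mp: "0 < real M" using M by simp
  have "real ((2*M) choose (M - j)) / 4^M \<le> real ((2*M) choose M) * exp ((real j)^2 / (2 * (real M)^2) - (real j)^2 / real M) / 4^M"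
    using even_ratio[OF M j] by (simp add: divide_right_mono)
  also have "\<dots> = (real ((2*M) choose M) / 4^M) * (exp ((real j)^2 / (2 * (real M)^2)) * exp (- ((real j)\<^sup>2) / real M))"
    by (simp add: exp_diff exp_minus field_simps)
  also have "\<dots> \<le> (1 / sqrt (real M)) * (exp (1/2) * exp (- ((real j)\<^sup>2) / real M))"
  proof (rule mult_mono)
    have "1 / sqrt (2*real M+1) \<le> 1 / sqrt (real M)" using Mp by (intro divide_left_mono) auto
    thus "real ((2*M) choose M) / 4^M \<le> 1 / sqrt (real M)" using s_bound[of M] by linarith
    have "(real j)^2 \<le> (real M)^2" using j by (simp add: power_mono)
    hence "(real j)^2 / (2 * (real M)^2) \<le> 1/2" using Mp by (simp add: field_simps)
    thus "exp ((real j)^2 / (2 * (real M)^2)) * exp (- ((real j)\<^sup>2) / real M) \<le> exp (1/2) * exp (- ((real j)\<^sup>2) / real M)"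
      by (intro mult_right_mono) auto
  qed auto
  finally show ?thesis by simp
qed

lemma exp_shift: "exp (p::real) * exp ((- a) / b) = exp (p + (c/d - a/b)) * exp ((- c)/d)"
proof -
  have "p + (- a) / b = (p + (c/d - a/b)) + (- c)/d" by simp
  thus ?thesis by (simp only: exp_add[symmetric])
qed

lemma h100: "10*10*(x::real)/y = 100/y*x" by simp

lemma bn_le_bound:
  assumes uv: "u \<le> v" and T: "1 \<le> u + v"
  shows "bn u v \<le> 100 / sqrt ((real u + real v)/2) * exp (- ((real v - real u)\<^sup>2) / (2*(real u + real v)))"
proof (cases "even (u+v)")
  case True
  then obtain M where M: "u + v = 2*M" by (metis dvd_def)
  define j where "j = M - u"
  have M1: "M \<ge> 1" using M T by simp
  have uj: "u = M - j" "j \<le> M" using M uv by (auto simp: j_def)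
  have Mp: "0 < real M" using M1 by simp
  have "bn u v = real ((2*M) choose (M - j)) / 4^M"
    unfolding bn_def M uj(1)[symmetric] by (simp add: power_mult)
  also have "\<dots> \<le> exp (1/2) / sqrt (real M) * exp (- ((real j)\<^sup>2) / real M)"
    by (rule even_bound[OF M1 uj(2)])
  also have "\<dots> \<le> 100 / sqrt (real M) * exp (- ((real j)\<^sup>2) / real M)"
  proof -
    have "exp (1/2::real) \<le> exp 1" by simp
    hence "exp (1/2::real) \<le> 100" using exp_le by linarith
    thus ?thesis using Mp by (intro mult_right_mono divide_right_mono) auto
  qed
  also have "\<dots> = 100 / sqrt ((real u + real v)/2) * exp (- ((real v - real u)\<^sup>2) / (2*(real u + real v)))"
  proof -
    have a: "(real u + real v)/2 = real M" using arg_cong[OF M, of real] by simp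
    have b: "real v - real u = 2 * real j" using M uv unfolding j_def by (simp add: of_nat_diff)
    have c: "2*(real u + real v) = 4 * real M" using arg_cong[OF M, of real] by simp
    show ?thesis unfolding a b c using Mp by (simp add: power_mult_distrib)
  qed
  finally show ?thesis .
next
  case False
  then obtain M where M: "u + v = 2*M+1" using oddE by blast
  define j where "j = M - u"
  have uM: "u \<le> M" using M uv by simp
  have uj: "u = M - j" "j \<le> M" using uM by (auto simp: j_def)
  have c2: "real ((2*M+1) choose u) \<le> 2 * real ((2*M) choose u)"
  proof (cases u)
    case 0 thus ?thesis by simp
  next
    case (Suc w)
    have e: "(2*M+1) choose u = ((2*M) choose w) + ((2*M) choose u)"
      using Suc binomial_Suc_Suc[of "2*M" w] by simp
    have "(2*M - w) * ((2*M) choose w) = Suc w * ((2*M) choose Suc w)" by (rule bratio)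
    moreover have "Suc w \<le> 2*M - w" using Suc uM by simp
    ultimately have "Suc w * ((2*M) choose w) \<le> Suc w * ((2*M) choose Suc w)"
      by (metis mult_le_mono1 dual_order.trans order_refl)
    hence "(2*M) choose w \<le> (2*M) choose u" using Suc mult_le_cancel1[of "Suc w"] by (simp only:)
    thus ?thesis unfolding e by simp
  qed
  have bnle: "bn u v \<le> real ((2*M) choose u) / 4^M"
  proof -
    have "bn u v = real ((2*M+1) choose u) / (2 * 4^M)"
      unfolding bn_def M by (simp add: power_mult)
    also have "\<dots> \<le> 2 * real ((2*M) choose u) / (2 * 4^M)"
      using c2 by (intro divide_right_mono) auto
    finally show ?thesis by simp
  qed
  show ?thesis
  proof (cases "M = 0")
    case True
    hence uv01: "u = 0" "v = 1" using M uv by auto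
    have "exp (1/2::real) \<le> exp 1" by simp
    hence "exp (1/2::real) \<le> 20" using exp_le by linarith
    hence "1/2 \<le> 100 * exp (- 1/2::real)" by (simp add: exp_minus field_simps)
    also have "100 * exp (- 1/2::real) \<le> 100 / sqrt (1/2) * exp (- 1/2)"
    proof -
      have "sqrt (1/2::real) \<le> 1" by simp
      hence "100 \<le> 100 / sqrt (1/2::real)" by (simp add: le_divide_eq)
      thus ?thesis by (intro mult_right_mono) auto
    qed
    finally show ?thesis using bnle uv01 True by (simp add: bn_def)
  next
    case False
    hence M1: "M \<ge> 1" by simp
    have Mp: "0 < real M" using M1 by simp
    have "bn u v \<le> exp (1/2) / sqrt (real M) * exp (- ((real j)\<^sup>2) / real M)"
      using bnle even_bound[OF M1 uj(2)] uj(1) by simp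
    also have "\<dots> \<le> 100 / sqrt (real M + 1/2) * exp (- ((2*real j + 1)\<^sup>2) / (4*real M + 2))"
    proof -
      have q: "sqrt (real M + 1/2) \<le> sqrt (2 * real M)" using M1 by simp
      have ex: "(2*real j + 1)\<^sup>2 / (4*real M + 2) - (real j)\<^sup>2 / real M \<le> 1"
      proof -
        have jm: "real j \<le> real M" using uj by simp
        have "real M * (2*real j + 1)\<^sup>2 - (real j)\<^sup>2 * (4*real M + 2) = 4 * real M * real j + real M - 2 * (real j)\<^sup>2"
          by (simp add: power2_eq_square algebra_simps)
        also have "\<dots> \<le> real M * (4*real M + 2)"
        proof -
          have k: "real M * real j \<le> real M * real M" using jm Mp by (intro mult_left_mono) auto
          have j2: "0 \<le> (real j)\<^sup>2" by simp
          have "real M * (4*real M + 2) = 4 * (real M * real M) + 2 * real M" by (simp add: algebra_simps)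
          moreover have "4 * real M * real j = 4 * (real M * real j)" by simp
          ultimately show ?thesis using k j2 Mp by linarith
        qed
        finally have N: "real M * (2*real j + 1)\<^sup>2 - (real j)\<^sup>2 * (4*real M + 2) \<le> real M * (4*real M + 2)" .
        have D: "0 < real M * (4*real M + 2)" using Mp by simp
        have eqx: "(2*real j + 1)\<^sup>2 / (4*real M + 2) - (real j)\<^sup>2 / real M = (real M * (2*real j + 1)\<^sup>2 - (real j)\<^sup>2 * (4*real M + 2)) / (real M * (4*real M + 2))"
          using Mp by (simp add: diff_divide_distrib)
        show ?thesis unfolding eqx using N D by (simp add: divide_le_eq_1_pos)
      qed
      have "exp (1/2) * exp (- ((real j)\<^sup>2) / real M) = exp (1/2 + ((2*real j + 1)\<^sup>2 / (4*real M + 2) - (real j)\<^sup>2 / real M)) * exp (- ((2*real j + 1)\<^sup>2) / (4*real M + 2))"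
        by (rule exp_shift)
      also have "\<dots> \<le> exp 2 * exp (- ((2*real j + 1)\<^sup>2) / (4*real M + 2))"
        using ex by (intro mult_right_mono) auto
      also have "\<dots> \<le> 9 * exp (- ((2*real j + 1)\<^sup>2) / (4*real M + 2))"
        using exp2_le by (intro mult_right_mono) auto
      finally have E: "exp (1/2) * exp (- ((real j)\<^sup>2) / real M) \<le> 9 * exp (- ((2*real j + 1)\<^sup>2) / (4*real M + 2))" .
      have "exp (1/2) / sqrt (real M) * exp (- ((real j)\<^sup>2) / real M) = (exp (1/2) * exp (- ((real j)\<^sup>2) / real M)) / sqrt (real M)" by simp
      also have "\<dots> \<le> 9 * exp (- ((2*real j + 1)\<^sup>2) / (4*real M + 2)) / sqrt (real M)"
        using E Mp by (intro divide_right_mono) auto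
      also have "\<dots> = 9 * sqrt 2 * exp (- ((2*real j + 1)\<^sup>2) / (4*real M + 2)) / sqrt (2 * real M)"
        by (simp add: real_sqrt_mult)
      also have "\<dots> \<le> 9 * sqrt 2 * exp (- ((2*real j + 1)\<^sup>2) / (4*real M + 2)) / sqrt (real M + 1/2)"
        using q Mp by (intro divide_left_mono) auto
      also have "\<dots> \<le> 10 * 10 * exp (- ((2*real j + 1)\<^sup>2) / (4*real M + 2)) / sqrt (real M + 1/2)"
      proof -
        have "sqrt 2 \<le> (2::real)" using real_sqrt_le_mono[of 2 4] by simp
        thus ?thesis by (intro divide_right_mono mult_right_mono) auto
      qed
      finally show ?thesis by (simp only: h100)
    qed
    also have "\<dots> = 100 / sqrt ((real u + real v)/2) * exp (- ((real v - real u)\<^sup>2) / (2*(real u + real v)))"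
    proof -
      have a: "(real u + real v)/2 = real M + 1/2" using arg_cong[OF M, of real] by simp
      have b: "real v - real u = 2 * real j + 1" using M uv unfolding j_def by (simp add: of_nat_diff)
      have c: "2*(real u + real v) = 4 * real M + 2" using arg_cong[OF M, of real] by simp
      show ?thesis unfolding a b c by simp
    qed
    finally show ?thesis .
  qed
qed
lemma walk_step:
  fixes E :: "(nat \<times> nat) list set" and n a b :: nat and \<alpha> :: real
  defines "E \<equiv> {xs. (n,n) \<in> set xs}"
  assumes ne: "(a,b) \<noteq> (n,n)"
  defines "q \<equiv> real a powr \<alpha> / (real a powr \<alpha> + real b powr \<alpha>)"
  shows "measure_pmf.prob (urn_walk \<alpha> (Suc N) (a,b)) E =
     q * measure_pmf.prob (urn_walk \<alpha> N (a+1,b)) E + (1-q) * measure_pmf.prob (urn_walk \<alpha> N (a,b+1)) E"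
proof -
  have pa: "0 \<le> real a powr \<alpha>" "0 \<le> real b powr \<alpha>" by auto
  have q01: "0 \<le> q" "q \<le> 1"
  proof -
    show "0 \<le> q" unfolding q_def using pa by simp
    show "q \<le> 1"
    proof (cases "real a powr \<alpha> + real b powr \<alpha> = 0")
      case True thus ?thesis by (simp add: q_def)
    next
      case False
      hence "0 < real a powr \<alpha> + real b powr \<alpha>" using pa by linarith
      thus ?thesis unfolding q_def using pa by (simp add: divide_le_eq_1_pos)
    qed
  qed
  have pre: "(#) (a,b) -` E = E" using ne by (auto simp: E_def)
  have "emeasure (measure_pmf (urn_walk \<alpha> (Suc N) (a,b))) E =
     emeasure (measure_pmf (urn_walk \<alpha> N (a+1,b))) E * ennreal q + emeasure (measure_pmf (urn_walk \<alpha> N (a,b+1))) E * ennreal (1-q)"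
    using q01 by (simp add: urn_step_def bind_map_pmf q_def[symmetric] pre)
  thus ?thesis using q01
    by (simp add: measure_pmf.emeasure_eq_measure ennreal_mult''[symmetric] ennreal_plus[symmetric] del: ennreal_plus)
qed

lemma bn_nonneg: "0 \<le> bn u v" by (simp add: bn_def)

lemma bn_pascal: "1 \<le> u + v \<Longrightarrow>
  (if u = 0 then 0 else bn (u-1) v) + (if v = 0 then 0 else bn u (v-1)) = 2 * bn u v"
proof -
  assume T: "1 \<le> u + v"
  show ?thesis
  proof (cases "u = 0")
    case True
    then obtain w where v: "v = Suc w" using T by (cases v) auto
    show ?thesis using True v by (simp add: bn_def)
  next
    case False
    then obtain u' where u: "u = Suc u'" by (cases u) auto
    show ?thesis
    proof (cases "v = 0")
      case True
      thus ?thesis using u by (simp add: bn_def)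
    next
      case False
      then obtain v' where v: "v = Suc v'" by (cases v) auto
      have c: "(u + v) choose u = ((u' + v) choose u') + ((u + v') choose u)"
        using binomial_Suc_Suc[of "u'+v" u'] u v by simp
      have p: "(2::real)^(u+v) = 2 * 2^(u'+v)" "(2::real)^(u+v') = 2^(u'+v)" using u v by simp_all
      show ?thesis using u v unfolding bn_def c p(1) by (simp add: p(2) add_divide_distrib)
    qed
  qed
qed

lemma bn_mono: assumes "u \<le> v" "1 \<le> u" shows "bn (u-1) v \<le> bn u (v-1)"
proof -
  obtain u' where u: "u = Suc u'" using assms by (cases u) auto
  obtain v' where v: "v = Suc v'" using assms by (cases v) auto
  have "(u'+v - u') * ((u'+v) choose u') = Suc u' * ((u'+v) choose Suc u')" by (rule bratio)
  hence "v * ((u'+v) choose u') = u * ((u'+v) choose u)" using u by simp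
  also have "\<dots> \<le> v * ((u'+v) choose u)" using assms by (intro mult_le_mono1) 
  finally have "(u'+v) choose u' \<le> (u'+v) choose u" using assms u by simp
  moreover have "u + v' = u' + v" using u v by simp
  ultimately show ?thesis using u v by (simp add: bn_def divide_right_mono)
qed

lemma key:
  assumes T: "1 \<le> u + v" and q: "0 \<le> q" "q \<le> 1"
    and q1: "u < v \<Longrightarrow> 1/2 \<le> q" and q2: "v < u \<Longrightarrow> q \<le> 1/2"
  shows "q * (if u = 0 then 0 else bn (u-1) v) + (1-q) * (if v = 0 then 0 else bn u (v-1)) \<le> bn u v"
proof -
  define X where "X = (if u = 0 then 0 else bn (u-1) v)"
  define Y where "Y = (if v = 0 then 0 else bn u (v-1))"
  have s: "X + Y = 2 * bn u v" using bn_pascal[OF T] by (simp add: X_def Y_def)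
  have "(q - 1/2) * (X - Y) \<le> 0"
  proof (cases u v rule: linorder_cases)
    case less
    have "X \<le> Y"
    proof (cases "u = 0")
      case True thus ?thesis using less by (simp add: X_def Y_def bn_nonneg)
    next
      case False thus ?thesis using less bn_mono[of u v] by (simp add: X_def Y_def)
    qed
    thus ?thesis using q1[OF less] by (simp add: mult_nonneg_nonpos)
  next
    case equal
    hence "u \<noteq> 0" using T by simp
    hence "X = Y" using equal bn_sym[of "u-1" u] by (simp add: X_def Y_def)
    thus ?thesis by simp
  next
    case greater
    have "Y \<le> X"
    proof (cases "v = 0")
      case True thus ?thesis using greater by (simp add: X_def Y_def bn_nonneg)
    next
      case False thus ?thesis using greater bn_mono[of v u] by (simp add: X_def Y_def bn_sym)
    qed
    thus ?thesis using q2[OF greater] by (simp add: mult_nonpos_nonneg)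
  qed
  moreover have "q * X + (1-q) * Y - (X + Y)/2 = (q - 1/2) * (X - Y)" by (simp add: field_simps)
  ultimately have "q * X + (1-q) * Y \<le> (X + Y)/2" by linarith
  moreover have "bn u v = (X + Y)/2" using s by simp
  ultimately show ?thesis unfolding X_def[symmetric] Y_def[symmetric] by (simp only:)
qed

lemma q_half:
  assumes "0 < \<alpha>" "b < a"
  shows "1/2 \<le> real a powr \<alpha> / (real a powr \<alpha> + real b powr \<alpha>)"
    "real b powr \<alpha> / (real b powr \<alpha> + real a powr \<alpha>) \<le> 1/2"
proof -
  have l: "real b powr \<alpha> < real a powr \<alpha>" using assms by (intro powr_less_mono2) auto
  have b0: "0 \<le> real b powr \<alpha>" by simp
  hence S: "0 < real a powr \<alpha> + real b powr \<alpha>" using l by linarith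
  show "1/2 \<le> real a powr \<alpha> / (real a powr \<alpha> + real b powr \<alpha>)"
    using S l by (simp add: le_divide_eq)
  show "real b powr \<alpha> / (real b powr \<alpha> + real a powr \<alpha>) \<le> 1/2"
    using S l by (simp add: divide_le_eq add.commute)
qed

definition hb :: "nat \<Rightarrow> nat \<Rightarrow> nat \<Rightarrow> real" where
  "hb n a b = (if a \<le> n \<and> b \<le> n then bn (n-a) (n-b) else 0)"

lemma hb_step:
  assumes "(a,b) \<noteq> (n,n)" "0 \<le> q" "q \<le> 1"
    and q1: "b < a \<Longrightarrow> 1/2 \<le> q" and q2: "a < b \<Longrightarrow> q \<le> 1/2"
  shows "q * hb n (a+1) b + (1-q) * hb n a (b+1) \<le> hb n a b"
proof (cases "a \<le> n \<and> b \<le> n")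
  case True
  define u where "u = n - a"
  define v where "v = n - b"
  have T: "1 \<le> u + v" using True assms(1) by (auto simp: u_def v_def)
  have e1: "hb n (a+1) b = (if u = 0 then 0 else bn (u-1) v)" using True
    by (auto simp: hb_def u_def v_def Suc_diff_Suc[symmetric])
  have e2: "hb n a (b+1) = (if v = 0 then 0 else bn u (v-1))" using True
    by (auto simp: hb_def u_def v_def)
  have e3: "hb n a b = bn u v" using True by (simp add: hb_def u_def v_def)
  show ?thesis unfolding e1 e2 e3
    by (rule key[OF T assms(2,3)]) (use True q1 q2 in \<open>auto simp: u_def v_def\<close>)
next
  case False
  hence "hb n (a+1) b = 0" "hb n a (b+1) = 0" by (auto simp: hb_def)
  thus ?thesis by (simp add: hb_def bn_nonneg)
qed

lemma walk_bound:
  assumes \<alpha>: "0 < \<alpha>"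
  shows "measure_pmf.prob (urn_walk \<alpha> N (a,b)) {xs. (n,n) \<in> set xs} \<le> hb n a b"
proof (induction N arbitrary: a b)
  case 0
  have hb0: "0 \<le> hb n a b" by (simp add: hb_def bn_nonneg)
  show ?case
  proof (cases "(a,b) = (n,n)")
    case True thus ?thesis by (auto simp: hb_def bn_def)
  next
    case False thus ?thesis using hb0 by (auto simp: indicator_def)
  qed
next
  case (Suc N)
  show ?case
  proof (cases "(a,b) = (n,n)")
    case True
    hence "hb n a b = 1" by (simp add: hb_def bn_def)
    thus ?thesis using measure_pmf.prob_le_1 by simp
  next
    case False
    define q where "q = real a powr \<alpha> / (real a powr \<alpha> + real b powr \<alpha>)"
    have pa: "0 \<le> real a powr \<alpha>" "0 \<le> real b powr \<alpha>" by auto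
    have q0: "0 \<le> q" unfolding q_def using pa by simp
    have q1: "q \<le> 1"
    proof (cases "real a powr \<alpha> + real b powr \<alpha> = 0")
      case True thus ?thesis by (simp add: q_def)
    next
      case False
      hence "0 < real a powr \<alpha> + real b powr \<alpha>" using pa by linarith
      thus ?thesis unfolding q_def using pa by (simp add: divide_le_eq_1_pos)
    qed
    have "measure_pmf.prob (urn_walk \<alpha> (Suc N) (a,b)) {xs. (n,n) \<in> set xs}
       = q * measure_pmf.prob (urn_walk \<alpha> N (a+1,b)) {xs. (n,n) \<in> set xs}
         + (1-q) * measure_pmf.prob (urn_walk \<alpha> N (a,b+1)) {xs. (n,n) \<in> set xs}"
      unfolding q_def by (rule walk_step[OF False])
    also have "\<dots> \<le> q * hb n (a+1) b + (1-q) * hb n a (b+1)"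
      using Suc.IH q0 q1 by (intro add_mono mult_left_mono) auto
    also have "\<dots> \<le> hb n a b"
    proof (rule hb_step[OF False q0 q1])
      show "b < a \<Longrightarrow> 1/2 \<le> q" unfolding q_def using q_half(1)[OF \<alpha>] by blast
      assume ab: "a < b"
      have "1 - q = real b powr \<alpha> / (real b powr \<alpha> + real a powr \<alpha>)"
      proof -
        have "real a powr \<alpha> < real b powr \<alpha>" using ab \<alpha> by (intro powr_less_mono2) auto
        hence "0 < real a powr \<alpha> + real b powr \<alpha>" using pa by linarith
        thus ?thesis unfolding q_def by (simp add: field_simps)
      qed
      hence "1/2 \<le> 1 - q" using q_half(1)[OF \<alpha> ab] by simp
      thus "q \<le> 1/2" by simp
    qed
    finally show ?thesis .
  qed
qed

lemma bingo_bound: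
  assumes "0 < \<alpha>"
  shows "bingo_prob \<alpha> a b n n \<le> hb n a b"
  unfolding bingo_prob_def by (rule cSUP_least) (auto intro: walk_bound[OF assms])

lemma bn_bound:
  assumes T: "1 \<le> u + v"
  shows "bn u v \<le> 100 / sqrt ((real u + real v)/2) * exp (- ((real v - real u)\<^sup>2) / (2*(real u + real v)))"
proof (cases "u \<le> v")
  case True thus ?thesis using bn_le_bound[OF True T] by simp
next
  case False
  hence "v \<le> u" by simp
  from bn_le_bound[OF this] T have "bn v u \<le> 100 / sqrt ((real v + real u)/2) * exp (- ((real u - real v)\<^sup>2) / (2*(real v + real u)))"
    by simp
  moreover have "(real u - real v)\<^sup>2 = (real v - real u)\<^sup>2" by (simp add: power2_commute)
  ultimately show ?thesis by (simp add: bn_sym add.commute)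
qed

lemma gauss_aux:
  assumes m: "0 < (m::real)" and L: "L \<noteq> 0"
  shows "100 / sqrt m * exp (- (L\<^sup>2) / m) \<le> 100 / \<bar>L\<bar> * exp (- (L\<^sup>2) / (2 * m))"
proof -
  define s where "s = \<bar>L\<bar> / sqrt m"
  have s0: "0 \<le> s" using m by (simp add: s_def)
  have s2: "s\<^sup>2 = L\<^sup>2 / m" using m by (simp add: s_def power_divide)
  have "s \<le> exp (s\<^sup>2 / 2)"
  proof -
    have "s \<le> 1 + s\<^sup>2/2"
    proof -
      have "0 \<le> (s - 1)\<^sup>2" by simp
      thus ?thesis by (simp add: power2_eq_square algebra_simps)
    qed
    also have "\<dots> \<le> exp (s\<^sup>2 / 2)" by (rule exp_ge_add_one_self)
    finally show ?thesis .
  qed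
  hence k: "s * exp (- (L\<^sup>2) / (2 * m)) \<le> 1"
    using s2 by (simp add: exp_minus field_simps)
  have Lp: "0 < \<bar>L\<bar>" using L by simp
  have "100 / sqrt m * exp (- (L\<^sup>2) / m) = 100 / \<bar>L\<bar> * exp (- (L\<^sup>2) / (2 * m)) * (s * exp (- (L\<^sup>2) / (2 * m)))"
  proof -
    have "exp (- (L\<^sup>2) / m) = exp (- (L\<^sup>2) / (2 * m)) * exp (- (L\<^sup>2) / (2 * m))"
      by (simp add: exp_add[symmetric])
    thus ?thesis using Lp m by (simp add: s_def field_simps)
  qed
  also have "\<dots> \<le> 100 / \<bar>L\<bar> * exp (- (L\<^sup>2) / (2 * m)) * 1"
    using k Lp by (intro mult_left_mono) auto
  finally show ?thesis by simp
qed

theorem mainTheorem11: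
  shows "\<exists>C C' :: real. \<forall>\<alpha>::real. \<alpha> > 1 \<longrightarrow>
    (\<forall>(n::nat) (A::real) (\<Lambda>::real).
       A < real n \<and> A + \<Lambda> \<in> \<int> \<and> A - \<Lambda> \<in> \<int> \<and> \<bar>\<Lambda>\<bar> \<le> A - 1 \<longrightarrow>
       bingo_prob \<alpha> (nat \<lfloor>A + \<Lambda>\<rfloor>) (nat \<lfloor>A - \<Lambda>\<rfloor>) n n
         \<le> C / sqrt (real n - A) * exp (- (\<Lambda>\<^sup>2) / (real n - A)) \<and>
       (\<Lambda> \<noteq> 0 \<longrightarrow>
         bingo_prob \<alpha> (nat \<lfloor>A + \<Lambda>\<rfloor>) (nat \<lfloor>A - \<Lambda>\<rfloor>) n n
           \<le> C' / \<bar>\<Lambda>\<bar> * exp (- (\<Lambda>\<^sup>2) / (2 * (real n - A)))))"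
proof (intro exI[of _ 100] allI impI)
  fix \<alpha> :: real and n :: nat and A \<Lambda> :: real
  assume \<alpha>: "\<alpha> > 1"
  assume H: "A < real n \<and> A + \<Lambda> \<in> \<int> \<and> A - \<Lambda> \<in> \<int> \<and> \<bar>\<Lambda>\<bar> \<le> A - 1"
  define a where "a = nat \<lfloor>A + \<Lambda>\<rfloor>"
  define b where "b = nat \<lfloor>A - \<Lambda>\<rfloor>"
  define m where "m = real n - A"
  have m0: "0 < m" using H by (simp add: m_def)
  have ra: "real a = A + \<Lambda>"
  proof -
    obtain k where k: "A + \<Lambda> = of_int k" using H Ints_cases by metis
    have "0 \<le> A + \<Lambda>" using H by linarith
    thus ?thesis using k by (simp add: a_def)
  qed
  have rb: "real b = A - \<Lambda>"
  proof -
    obtain k where k: "A - \<Lambda> = of_int k" using H Ints_cases by metis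
    have "0 \<le> A - \<Lambda>" using H by linarith
    thus ?thesis using k by (simp add: b_def)
  qed
  have B1: "bingo_prob \<alpha> a b n n \<le> 100 / sqrt m * exp (- (\<Lambda>\<^sup>2) / m)"
  proof -
    have "bingo_prob \<alpha> a b n n \<le> hb n a b" using \<alpha> by (intro bingo_bound) simp
    also have "hb n a b \<le> 100 / sqrt m * exp (- (\<Lambda>\<^sup>2) / m)"
    proof (cases "a \<le> n \<and> b \<le> n")
      case True
      define u where "u = n - a"
      define v where "v = n - b"
      have ru: "real u = m - \<Lambda>" using True ra by (simp add: u_def m_def of_nat_diff)
      have rv: "real v = m + \<Lambda>" using True rb by (simp add: v_def m_def of_nat_diff)
      have T: "1 \<le> u + v"
      proof -
        have "0 < real u + real v" using ru rv m0 by simp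
        thus ?thesis by linarith
      qed
      have "hb n a b = bn u v" using True by (simp add: hb_def u_def v_def)
      also have "\<dots> \<le> 100 / sqrt ((real u + real v)/2) * exp (- ((real v - real u)\<^sup>2) / (2*(real u + real v)))"
        by (rule bn_bound[OF T])
      also have "\<dots> = 100 / sqrt m * exp (- (\<Lambda>\<^sup>2) / m)"
      proof -
        have e1: "(real u + real v)/2 = m" using ru rv by simp
        have e2: "(real v - real u)\<^sup>2 = 4 * \<Lambda>\<^sup>2" using ru rv by (simp add: power2_eq_square)
        have e3: "2*(real u + real v) = 4 * m" using ru rv by simp
        show ?thesis unfolding e1 e2 e3 by simp
      qed
      finally show ?thesis .
    next
      case False
      hence "hb n a b = 0" unfolding hb_def by (simp only: if_False)
      thus ?thesis using m0 by simp
    qed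
    finally show ?thesis .
  qed
  show "bingo_prob \<alpha> (nat \<lfloor>A + \<Lambda>\<rfloor>) (nat \<lfloor>A - \<Lambda>\<rfloor>) n n
         \<le> 100 / sqrt (real n - A) * exp (- (\<Lambda>\<^sup>2) / (real n - A)) \<and>
       (\<Lambda> \<noteq> 0 \<longrightarrow>
         bingo_prob \<alpha> (nat \<lfloor>A + \<Lambda>\<rfloor>) (nat \<lfloor>A - \<Lambda>\<rfloor>) n n
           \<le> 100 / \<bar>\<Lambda>\<bar> * exp (- (\<Lambda>\<^sup>2) / (2 * (real n - A))))"
    using B1 gauss_aux[OF m0, of \<Lambda>] unfolding a_def b_def m_def by auto
qed
end
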